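(* Let $F$ be an admissible fundamental matrix on $J$. Then there is a constant $C>0$ such that $|\psi_F(a,g)|\le C\|g\|_Y$ for all $g\in Y$ and $a\in J$. Furthermore, for every $g\in Y$ the map $a\mapsto\psi_F(a,g)$, $J\to\mathbb{R}$, is continuous.
   Context: Notation: $A^j{}_k$ is the entry in row $j$, column $k$; a prime denotes $\partial_y$; $\varphi(y,\alpha):=-\frac{2\alpha}{(1-y)^2}+\frac{2\alpha}{1-y}-\frac{2}{\alpha}\log(1-y)$; each occurrence of $\mathcal P(y)$ denotes some polynomial in $y$ with complex coefficients independent of $a$ (different occurrences may differ). Let $a_*\in\mathbb{R}\setminus\{0\}$, $J\subset\mathbb{R}\setminus\{-a_*\}$ compact. An admissible right fundamental matrix $F_R(y,a)$, $(y,a)\in[0,1)\times J$, is the real $4\times4$ matrix with $j$-th column $(\Re f_j,\Im f_j,\Re f_j',\Im f_j')^T(y,a)$, where $\det F_R\neq0$ on $[0,1)\times J$ and $f_1=1+\frac{a_*+a+i}{2(a_*+a)}(1-y)+(1-y)^2\mathcal P(y)$, $f_2=i+i\frac{a_*+a+i}{2(a_*+a)}(1-y)+(1-y)^2\mathcal P(y)$, $f_3=e^{i\varphi(y,a_*+a)}(1-y)[1+\frac{2(a_*+a)-i}{2(a_*+a)}(1-y)+(1-y)^2\mathcal P(y)]+e^{-i\varphi(y,a_*+a)}(1-y)^5\mathcal P(y)$, $f_4=ie^{i\varphi(y,a_*+a)}(1-y)[1+\frac{2(a_*+a)-i}{2(a_*+a)}(1-y)+(1-y)^2\mathcal P(y)]+ie^{-i\varphi(y,a_*+a)}(1-y)^5\mathcal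 P(y)$. An admissible left fundamental matrix $F_L(y)$, $y\in(-1,0]$, is the real $4\times4$ matrix with columns $(\Re g_j,\Im g_j,\Re g_j',\Im g_j')^T$, $\det F_L\neq0$ on $(-1,0]$, $g_1=1+(1+y)\mathcal P(y)$, $g_2=i+(1+y)\mathcal P(y)$, $g_3=\frac{1}{1+y}[1+(1+y)\mathcal P(y)]$, $g_4=\frac{i}{1+y}[1+(1+y)\mathcal P(y)]$. With $M_F(a):=F_L(0)^{-1}F_R(0,a)$, the admissible fundamental matrix on $J$ is $F(y,a):=F_L(y)M_F(a)$ for $y\in(-1,0]$, $F(y,a):=F_R(y,a)$ for $y\in(0,1)$, assuming $M_F(a)^3{}_1\neq0$ for all $a\in J$. $Y$ is the space of $f\in C(-1,1)$ with $(1+y)(1-y)^2f(y)$ extending continuously to $[-1,1]$, $\|f\|_Y:=\sup_{(-1,1)}(1+y)(1-y)^2|f(y)|$. For $g\in Y$: $\alpha_F^k(a,g)(y):=F^{-1}(y,a)^k{}_3\Re g(y)+F^{-1}(y,a)^k{}_4\Im g(y)$ ($(k,\ell)$ entries of $F(y,a)^{-1}$), and \[ \psi_F(a,g):=\sum_{k=3}^4\Big[M_F(a)^4{}_1\frac{M_F(a)^3{}_k}{M_F(a)^3{}_1}-M_F(a)^4{}_k\Big]\int_{-1}^1\alpha_F^k(a,g)(x)dx. \] *)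

theory Defs
  imports "HOL-Analysis.Analysis" "HOL-Computational_Algebra.Polynomial"
begin

text \<open>Matrices are real^4^4 (HOL-Analysis); the paper's index j (row) and k (column),
  j,k in 1..4, are the numerals 1,2,3,4 of the index type 4 (4 is a distinct element).
  Entry A^j_k is A $ j $ k.\<close>

definition phi :: "real \<Rightarrow> real \<Rightarrow> real" where
  "phi y \<alpha> = - 2 * \<alpha> / (1 - y)^2 + 2 * \<alpha> / (1 - y) - 2 / \<alpha> * ln (1 - y)"

definition col4 :: "real \<Rightarrow> real \<Rightarrow> real \<Rightarrow> real \<Rightarrow> real^4" where
  "col4 a b c d = (\<chi> i. if i = 1 then a else if i = 2 then b else if i = 3 then c else d)"

definition sol_col :: "(real \<Rightarrow> complex) \<Rightarrow> real \<Rightarrow> real^4" where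
  "sol_col f y = col4 (Re (f y)) (Im (f y))
      (Re (vector_derivative f (at y))) (Im (vector_derivative f (at y)))"

definition mat_of_cols4 :: "real^4 \<Rightarrow> real^4 \<Rightarrow> real^4 \<Rightarrow> real^4 \<Rightarrow> real^4^4" where
  "mat_of_cols4 v1 v2 v3 v4 =
     (\<chi> r c. (if c = 1 then v1 else if c = 2 then v2 else if c = 3 then v3 else v4) $ r)"

definition fund_mat ::
  "(real \<Rightarrow> complex) \<Rightarrow> (real \<Rightarrow> complex) \<Rightarrow> (real \<Rightarrow> complex) \<Rightarrow> (real \<Rightarrow> complex)
     \<Rightarrow> real \<Rightarrow> real^4^4" where
  "fund_mat f1 f2 f3 f4 y = mat_of_cols4 (sol_col f1 y) (sol_col f2 y) (sol_col f3 y) (sol_col f4 y)"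

definition fR1 :: "complex poly \<Rightarrow> real \<Rightarrow> real \<Rightarrow> complex" where
  "fR1 p \<alpha> y = 1 + (of_real \<alpha> + \<i>) / (2 * of_real \<alpha>) * of_real (1 - y)
       + of_real ((1 - y)^2) * poly p (of_real y)"

definition fR2 :: "complex poly \<Rightarrow> real \<Rightarrow> real \<Rightarrow> complex" where
  "fR2 p \<alpha> y = \<i> + \<i> * (of_real \<alpha> + \<i>) / (2 * of_real \<alpha>) * of_real (1 - y)
       + of_real ((1 - y)^2) * poly p (of_real y)"

definition fR3 :: "complex poly \<Rightarrow> complex poly \<Rightarrow> real \<Rightarrow> real \<Rightarrow> complex" where
  "fR3 p q \<alpha> y =
     exp (\<i> * of_real (phi y \<alpha>)) * of_real (1 - y)
       * (1 + (2 * of_real \<alpha> - \<i>) / (2 * of_real \<alpha>) * of_real (1 - y)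
            + of_real ((1 - y)^2) * poly p (of_real y))
     + exp (- \<i> * of_real (phi y \<alpha>)) * of_real ((1 - y)^5) * poly q (of_real y)"

definition fR4 :: "complex poly \<Rightarrow> complex poly \<Rightarrow> real \<Rightarrow> real \<Rightarrow> complex" where
  "fR4 p q \<alpha> y =
     \<i> * exp (\<i> * of_real (phi y \<alpha>)) * of_real (1 - y)
       * (1 + (2 * of_real \<alpha> - \<i>) / (2 * of_real \<alpha>) * of_real (1 - y)
            + of_real ((1 - y)^2) * poly p (of_real y))
     + \<i> * exp (- \<i> * of_real (phi y \<alpha>)) * of_real ((1 - y)^5) * poly q (of_real y)"

definition admissible_right :: "real \<Rightarrow> real set \<Rightarrow> (real \<Rightarrow> real \<Rightarrow> real^4^4) \<Rightarrow> bool" where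
  "admissible_right as J FR \<longleftrightarrow>
     (\<exists>p1 p2 p3 q3 p4 q4 :: complex poly. \<forall>y\<in>{0..<1}. \<forall>a\<in>J.
        FR y a = fund_mat (fR1 p1 (as + a)) (fR2 p2 (as + a)) (fR3 p3 q3 (as + a))
                          (fR4 p4 q4 (as + a)) y
        \<and> det (FR y a) \<noteq> 0)"

definition gL1 :: "complex poly \<Rightarrow> real \<Rightarrow> complex" where
  "gL1 p y = 1 + of_real (1 + y) * poly p (of_real y)"

definition gL2 :: "complex poly \<Rightarrow> real \<Rightarrow> complex" where
  "gL2 p y = \<i> + of_real (1 + y) * poly p (of_real y)"

definition gL3 :: "complex poly \<Rightarrow> real \<Rightarrow> complex" where
  "gL3 p y = 1 / of_real (1 + y) * (1 + of_real (1 + y) * poly p (of_real y))"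

definition gL4 :: "complex poly \<Rightarrow> real \<Rightarrow> complex" where
  "gL4 p y = \<i> / of_real (1 + y) * (1 + of_real (1 + y) * poly p (of_real y))"

definition admissible_left :: "(real \<Rightarrow> real^4^4) \<Rightarrow> bool" where
  "admissible_left FL \<longleftrightarrow>
     (\<exists>p1 p2 p3 p4 :: complex poly. \<forall>y\<in>{-1<..0}.
        FL y = fund_mat (gL1 p1) (gL2 p2) (gL3 p3) (gL4 p4) y \<and> det (FL y) \<noteq> 0)"

definition MF :: "(real \<Rightarrow> real^4^4) \<Rightarrow> (real \<Rightarrow> real \<Rightarrow> real^4^4) \<Rightarrow> real \<Rightarrow> real^4^4" where
  "MF FL FR a = matrix_inv (FL 0) ** FR 0 a"

definition Ffund :: "(real \<Rightarrow> real^4^4) \<Rightarrow> (real \<Rightarrow> real \<Rightarrow> real^4^4) \<Rightarrow> real \<Rightarrow> real \<Rightarrow> real^4^4" where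
  "Ffund FL FR y a = (if y \<le> 0 then FL y ** MF FL FR a else FR y a)"

definition admissible_fund ::
  "real \<Rightarrow> real set \<Rightarrow> (real \<Rightarrow> real^4^4) \<Rightarrow> (real \<Rightarrow> real \<Rightarrow> real^4^4) \<Rightarrow> bool" where
  "admissible_fund as J FL FR \<longleftrightarrow>
     admissible_right as J FR \<and> admissible_left FL \<and> (\<forall>a\<in>J. MF FL FR a $ 3 $ 1 \<noteq> 0)"

definition inY :: "(real \<Rightarrow> complex) \<Rightarrow> bool" where
  "inY f \<longleftrightarrow> continuous_on {-1<..<1} f \<and>
     (\<exists>h. continuous_on {-1..1} h \<and>
          (\<forall>y\<in>{-1<..<1}. h y = of_real ((1 + y) * (1 - y)^2) * f y))"

definition Ynorm :: "(real \<Rightarrow> complex) \<Rightarrow> real" where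
  "Ynorm f = (SUP y\<in>{-1<..<1}. (1 + y) * (1 - y)^2 * cmod (f y))"

definition alphaF ::
  "(real \<Rightarrow> real^4^4) \<Rightarrow> (real \<Rightarrow> real \<Rightarrow> real^4^4) \<Rightarrow> real \<Rightarrow> (real \<Rightarrow> complex) \<Rightarrow> 4
     \<Rightarrow> real \<Rightarrow> real" where
  "alphaF FL FR a g k y =
     matrix_inv (Ffund FL FR y a) $ k $ 3 * Re (g y) + matrix_inv (Ffund FL FR y a) $ k $ 4 * Im (g y)"

definition psiF ::
  "(real \<Rightarrow> real^4^4) \<Rightarrow> (real \<Rightarrow> real \<Rightarrow> real^4^4) \<Rightarrow> real \<Rightarrow> (real \<Rightarrow> complex) \<Rightarrow> real" where
  "psiF FL FR a g =
     (\<Sum>k\<in>{3, 4::4}.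
        (MF FL FR a $ 4 $ 1 * (MF FL FR a $ 3 $ k / MF FL FR a $ 3 $ 1) - MF FL FR a $ 4 $ k)
        * integral {-1..1} (alphaF FL FR a g k))"

end

theory Submission
  imports Defs
begin

definition dphi :: "real \<Rightarrow> real \<Rightarrow> real" where
  "dphi y \<alpha> = -4*\<alpha>/(1-y)^3 + 2*\<alpha>/(1-y)^2 + 2/(\<alpha>*(1-y))"

lemma phi_deriv': assumes "t > 0" "\<alpha> \<noteq> 0"
  shows "((\<lambda>y. phi y \<alpha>) has_real_derivative dphi (1 - t) \<alpha>) (at (1 - t))"
  unfolding phi_def dphi_def
  apply (rule derivative_eq_intros refl | (use assms in simp; fail))+
  using assms apply (simp add: field_simps)
  apply (simp add: numeral_eq_Suc algebra_simps)
  done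

lemma phi_deriv: assumes "y < 1" "\<alpha> \<noteq> 0"
  shows "((\<lambda>y. phi y \<alpha>) has_real_derivative dphi y \<alpha>) (at y)"
  using phi_deriv'[of "1 - y" \<alpha>] assms by simp

lemma E_deriv: fixes c :: complex assumes "y < 1" "\<alpha> \<noteq> 0"
  shows "((\<lambda>y. exp (c * of_real (phi y \<alpha>))) has_vector_derivative
      (c * of_real (dphi y \<alpha>) * exp (c * of_real (phi y \<alpha>)))) (at y)"
proof -
  have "((\<lambda>y. c * of_real (phi y \<alpha>)) has_vector_derivative (c * of_real (dphi y \<alpha>))) (at y)"
    by (rule derivative_eq_intros phi_deriv assms refl)+
  from field_vector_diff_chain_at[OF this DERIV_exp]
  show ?thesis by (simp add: o_def)
qed

lemma P_deriv: "((\<lambda>y. poly p (of_real y) :: complex) has_vector_derivative poly (pderiv p) (of_real y)) (at y)"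
  by (rule has_vector_derivative_real_field) (rule poly_DERIV)

lemma T_deriv: "((\<lambda>y. of_real (1 - y) :: complex) has_vector_derivative -1) (at y)"
  by (rule derivative_eq_intros refl)+ simp

definition bet :: "real \<Rightarrow> complex" where "bet \<alpha> = (of_real \<alpha> + \<i>) / (2 * of_real \<alpha>)"
definition gam :: "real \<Rightarrow> complex" where "gam \<alpha> = (2 * of_real \<alpha> - \<i>) / (2 * of_real \<alpha>)"
definition Phi :: "real \<Rightarrow> real \<Rightarrow> real" where "Phi t \<alpha> = -4*\<alpha> + 2*\<alpha>*t + 2*t^2/\<alpha>"

definition PP :: "complex poly \<Rightarrow> real \<Rightarrow> complex" where "PP p t = poly p (of_real (1 - t))"
definition dPP :: "complex poly \<Rightarrow> real \<Rightarrow> complex" where "dPP p t = poly (pderiv p) (of_real (1 - t))"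

definition V1 where "V1 p \<alpha> t = 1 + bet \<alpha> * of_real t + of_real t ^ 2 * PP p t"
definition W1 where "W1 p \<alpha> t = of_real t ^ 2 * (- bet \<alpha> - 2 * of_real t * PP p t + of_real t ^ 2 * dPP p t)"
definition V2 where "V2 p \<alpha> t = \<i> + \<i> * bet \<alpha> * of_real t + of_real t ^ 2 * PP p t"
definition W2 where "W2 p \<alpha> t = of_real t ^ 2 * (- \<i> * bet \<alpha> - 2 * of_real t * PP p t + of_real t ^ 2 * dPP p t)"
definition Ufn where "Ufn p \<alpha> t = 1 + gam \<alpha> * of_real t + of_real t ^ 2 * PP p t"
definition dUfn where "dUfn p \<alpha> t = - gam \<alpha> - 2 * of_real t * PP p t + of_real t ^ 2 * dPP p t"
definition V3 where "V3 p q \<alpha> t w = w * of_real t * Ufn p \<alpha> t + cnj w * of_real t ^ 5 * PP q t"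
definition W3 where "W3 p q \<alpha> t w = w * (\<i> * of_real (Phi t \<alpha>) * Ufn p \<alpha> t - of_real t ^ 2 * Ufn p \<alpha> t
      + of_real t ^ 3 * dUfn p \<alpha> t)
    + cnj w * (- \<i> * of_real (Phi t \<alpha>) * of_real t ^ 4 * PP q t - 5 * of_real t ^ 6 * PP q t
      + of_real t ^ 7 * dPP q t)"

lemma fR1_deriv: "(fR1 p \<alpha> has_vector_derivative
     (- (of_real \<alpha> + \<i>) / (2 * of_real \<alpha>) - 2 * of_real (1-y) * poly p (of_real y)
            + of_real ((1 - y)^2) * poly (pderiv p) (of_real y))) (at y)"
  unfolding fR1_def[abs_def]
  apply (rule has_vector_derivative_eq_rhs)
  apply (rule derivative_eq_intros P_deriv refl)+
  apply (simp add: field_simps)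
  done

lemma fR2_deriv: "(fR2 p \<alpha> has_vector_derivative
     (- \<i> * (of_real \<alpha> + \<i>) / (2 * of_real \<alpha>) - 2 * of_real (1-y) * poly p (of_real y)
            + of_real ((1 - y)^2) * poly (pderiv p) (of_real y))) (at y)"
  unfolding fR2_def[abs_def]
  apply (rule has_vector_derivative_eq_rhs)
  apply (rule derivative_eq_intros P_deriv refl)+
  apply (simp add: field_simps)
  done

lemma fR3_deriv: assumes "y < 1" "\<alpha> \<noteq> 0"
  shows "(fR3 p q \<alpha> has_vector_derivative
     (exp (\<i> * of_real (phi y \<alpha>)) * (\<i> * of_real (dphi y \<alpha>) * of_real (1-y) * (1 + (2 * of_real \<alpha> - \<i>) / (2 * of_real \<alpha>) * of_real (1 - y)
            + of_real ((1 - y)^2) * poly p (of_real y))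
        - (1 + (2 * of_real \<alpha> - \<i>) / (2 * of_real \<alpha>) * of_real (1 - y)
            + of_real ((1 - y)^2) * poly p (of_real y))
        + of_real (1-y) * (- (2 * of_real \<alpha> - \<i>) / (2 * of_real \<alpha>) - 2 * of_real (1-y) * poly p (of_real y)
            + of_real ((1 - y)^2) * poly (pderiv p) (of_real y)))
     + exp (- \<i> * of_real (phi y \<alpha>)) * (- \<i> * of_real (dphi y \<alpha>) * of_real ((1-y)^5) * poly q (of_real y)
        - 5 * of_real ((1-y)^4) * poly q (of_real y) + of_real ((1-y)^5) * poly (pderiv q) (of_real y)))) (at y)"
  unfolding fR3_def[abs_def]
  apply (rule has_vector_derivative_eq_rhs)
  apply (rule derivative_eq_intros E_deriv[OF assms] P_deriv refl)+
  using assms apply (simp add: field_simps)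
  done

lemma fR4_eq: "fR4 p q \<alpha> = (\<lambda>y. \<i> * fR3 p q \<alpha> y)"
  unfolding fR4_def fR3_def by (simp add: fun_eq_iff algebra_simps)

lemma cnjE: "cnj (exp (\<i> * of_real x)) = exp (- \<i> * of_real x)"
  by (simp add: exp_cnj)

lemma dphi_t3: "y < 1 \<Longrightarrow> \<alpha> \<noteq> 0 \<Longrightarrow> of_real ((1-y)^3) * (of_real (dphi y \<alpha>) :: complex) = of_real (Phi (1-y) \<alpha>)"
proof -
  assume a: "y < 1" "\<alpha> \<noteq> 0"
  define t where "t = 1 - y"
  have t: "y = 1 - t" "t > 0" using a by (auto simp: t_def)
  have "(1-y)^3 * dphi y \<alpha> = Phi (1-y) \<alpha>"
    unfolding dphi_def Phi_def t(1) using a t(2) by (simp add: field_simps power2_eq_square power3_eq_cube)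
  then show ?thesis by (metis of_real_mult)
qed

lemma fR1_V: "fR1 p \<alpha> y = V1 p \<alpha> (1-y)"
  unfolding fR1_def V1_def bet_def PP_def by simp
lemma fR2_V: "fR2 p \<alpha> y = V2 p \<alpha> (1-y)"
  unfolding fR2_def V2_def bet_def PP_def by (simp add: algebra_simps times_divide_eq_right)
lemma fR3_V: "fR3 p q \<alpha> y = V3 p q \<alpha> (1-y) (exp (\<i> * of_real (phi y \<alpha>)))"
  unfolding fR3_def V3_def Ufn_def gam_def PP_def cnjE by (simp add: algebra_simps)
lemma fR4_V: "fR4 p q \<alpha> y = \<i> * V3 p q \<alpha> (1-y) (exp (\<i> * of_real (phi y \<alpha>)))"
  unfolding fR4_eq fR3_V ..

lemma fR1_W: "of_real ((1-y)^2) * vector_derivative (fR1 p \<alpha>) (at y) = W1 p \<alpha> (1-y)"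
  unfolding vector_derivative_at[OF fR1_deriv] W1_def bet_def PP_def dPP_def by (cases "\<alpha> = 0") (simp_all add: field_simps)
lemma fR2_W: "of_real ((1-y)^2) * vector_derivative (fR2 p \<alpha>) (at y) = W2 p \<alpha> (1-y)"
  unfolding vector_derivative_at[OF fR2_deriv] W2_def bet_def PP_def dPP_def by (simp add: algebra_simps times_divide_eq_right minus_divide_left)
lemma fR3_W: assumes "y < 1" "\<alpha> \<noteq> 0"
  shows "of_real ((1-y)^2) * vector_derivative (fR3 p q \<alpha>) (at y) = W3 p q \<alpha> (1-y) (exp (\<i> * of_real (phi y \<alpha>)))"
proof -
  have d: "of_real ((1-y)^3) * (of_real (dphi y \<alpha>) :: complex) = of_real (Phi (1-y) \<alpha>)"
    using dphi_t3 assms by blast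
  have nz: "(1 - of_real y :: complex) \<noteq> 0" "(of_real \<alpha> :: complex) \<noteq> 0" using assms by auto
  then have d': "(of_real (dphi y \<alpha>)::complex) = of_real (Phi (1-y) \<alpha>) / (1 - of_real y)^3"
    using d by (simp add: field_simps)
  show ?thesis
  unfolding vector_derivative_at[OF fR3_deriv[OF assms]] W3_def Ufn_def dUfn_def gam_def PP_def dPP_def cnjE d'
  using nz by (simp add: field_simps) (simp add: algebra_simps power2_eq_square power3_eq_cube power4_eq_xxxx numeral_eq_Suc)
qed
lemma fR4_W: assumes "y < 1" "\<alpha> \<noteq> 0"
  shows "of_real ((1-y)^2) * vector_derivative (fR4 p q \<alpha>) (at y) = \<i> * W3 p q \<alpha> (1-y) (exp (\<i> * of_real (phi y \<alpha>)))"
proof -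
  have "(fR4 p q \<alpha> has_vector_derivative \<i> * vector_derivative (fR3 p q \<alpha>) (at y)) (at y)"
    unfolding fR4_eq by (rule has_vector_derivative_mult_right) (metis fR3_deriv[OF assms] vector_derivative_at)
  then show ?thesis using fR3_W[OF assms] by (simp add: vector_derivative_at algebra_simps)
qed

definition QQ :: "complex poly \<Rightarrow> real \<Rightarrow> complex" where "QQ p y = poly p (of_real y)"
definition dQQ :: "complex poly \<Rightarrow> real \<Rightarrow> complex" where "dQQ p y = poly (pderiv p) (of_real y)"

definition HV1 where "HV1 p y = 1 + of_real (1+y) * QQ p y"
definition HW1 where "HW1 p y = of_real (1+y) * QQ p y + of_real (1+y) ^ 2 * dQQ p y"
definition HV2 where "HV2 p y = \<i> + of_real (1+y) * QQ p y"
definition HV3 where "HV3 p y = 1 + of_real (1+y) * QQ p y"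
definition HW3 where "HW3 p y = -1 + of_real (1+y) ^ 2 * dQQ p y"

lemma gL1_deriv: "(gL1 p has_vector_derivative (poly p (of_real y) + of_real (1+y) * poly (pderiv p) (of_real y))) (at y)"
  unfolding gL1_def[abs_def]
  apply (rule has_vector_derivative_eq_rhs)
  apply (rule derivative_eq_intros P_deriv refl)+
  apply (simp add: field_simps)
  done

lemma gL2_deriv: "(gL2 p has_vector_derivative (poly p (of_real y) + of_real (1+y) * poly (pderiv p) (of_real y))) (at y)"
  unfolding gL2_def[abs_def]
  apply (rule has_vector_derivative_eq_rhs)
  apply (rule derivative_eq_intros P_deriv refl)+
  apply (simp add: field_simps)
  done

lemma nz1: "y > -1 \<Longrightarrow> (1 + of_real y :: complex) \<noteq> 0"
proof -
  assume "y > -1"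
  then have "(of_real (1 + y) :: complex) \<noteq> 0" by (simp only: of_real_eq_0_iff)
  then show ?thesis by simp
qed

lemma gL3_deriv: assumes "y > -1"
  shows "(gL3 p has_vector_derivative (- 1 / of_real ((1+y)^2) + poly (pderiv p) (of_real y))) (at y)"
proof -
  have nz: "(1 + of_real y :: complex) \<noteq> 0" using nz1 assms by blast
  have "((\<lambda>y. of_real (1 / (1 + y)) + poly p (of_real y)) has_vector_derivative (- 1 / of_real ((1+y)^2) + poly (pderiv p) (of_real y))) (at y)"
  apply (rule has_vector_derivative_eq_rhs)
  apply (rule derivative_eq_intros P_deriv refl | (use assms in simp; fail))+
  using nz assms apply (simp_all add: field_simps power2_eq_square)
  done
  then show ?thesis
  proof (rule has_vector_derivative_transform_within_open[where S="{-1<..}"])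
    fix x :: real assume "x \<in> {-1<..}"
    then have "(1 + of_real x :: complex) \<noteq> 0" using nz1 by auto
    then show "of_real (1 / (1 + x)) + poly p (of_real x) = gL3 p x"
      unfolding gL3_def by (simp add: field_simps)
  qed (use assms in auto)
qed

lemma gL4_eq: "gL4 p = (\<lambda>y. \<i> * gL3 p y)"
  unfolding gL4_def gL3_def by (simp add: fun_eq_iff)

lemma gL1_V: "gL1 p y = HV1 p y" unfolding gL1_def HV1_def QQ_def ..
lemma gL2_V: "gL2 p y = HV2 p y" unfolding gL2_def HV2_def QQ_def ..
lemma gL3_V: "y > -1 \<Longrightarrow> of_real (1+y) * gL3 p y = HV3 p y"
  unfolding gL3_def HV3_def QQ_def using nz1[of y] by (auto simp: field_simps)
lemma gL4_V: "y > -1 \<Longrightarrow> of_real (1+y) * gL4 p y = \<i> * HV3 p y"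
  unfolding gL4_eq using gL3_V by (metis mult.left_commute)

lemma gL1_W: "of_real (1+y) * vector_derivative (gL1 p) (at y) = HW1 p y"
  unfolding vector_derivative_at[OF gL1_deriv] HW1_def QQ_def dQQ_def by (simp add: algebra_simps power2_eq_square)
lemma gL2_W: "of_real (1+y) * vector_derivative (gL2 p) (at y) = HW1 p y"
  unfolding vector_derivative_at[OF gL2_deriv] HW1_def QQ_def dQQ_def by (simp add: algebra_simps power2_eq_square)
lemma gL3_W: "y > -1 \<Longrightarrow> of_real ((1+y)^2) * vector_derivative (gL3 p) (at y) = HW3 p y"
proof -
  assume a: "y > -1"
  have "(of_real ((1+y)^2)::complex) \<noteq> 0" using a nz1[OF a] by simp
  then show ?thesis
  unfolding vector_derivative_at[OF gL3_deriv[OF a]] HW3_def QQ_def dQQ_def by (simp add: right_diff_distrib)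
qed
lemma gL4_W: assumes "y > -1" shows "of_real ((1+y)^2) * vector_derivative (gL4 p) (at y) = \<i> * HW3 p y"
proof -
  have "(gL4 p has_vector_derivative \<i> * vector_derivative (gL3 p) (at y)) (at y)"
    unfolding gL4_eq by (rule has_vector_derivative_mult_right) (metis gL3_deriv[OF assms] vector_derivative_at)
  then show ?thesis using gL3_W[OF assms] by (simp add: vector_derivative_at algebra_simps)
qed

lemma four_distinct: "(1::4) \<noteq> 2" "(1::4) \<noteq> 3" "(1::4) \<noteq> 4" "(2::4) \<noteq> 3" "(2::4) \<noteq> 4" "(3::4) \<noteq> 4"
  by simp_all

lemma col4_nth[simp]: "col4 a b c d $ 1 = a" "col4 a b c d $ 2 = b" "col4 a b c d $ 3 = c" "col4 a b c d $ 4 = d"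
  by (simp_all add: col4_def)

lemma moc_nth[simp]: "mat_of_cols4 v1 v2 v3 v4 $ r $ 1 = v1 $ r" "mat_of_cols4 v1 v2 v3 v4 $ r $ 2 = v2 $ r"
  "mat_of_cols4 v1 v2 v3 v4 $ r $ 3 = v3 $ r" "mat_of_cols4 v1 v2 v3 v4 $ r $ 4 = v4 $ r"
  by (simp_all add: mat_of_cols4_def)

lemma cont_col4[continuous_intros]: "continuous_on S a \<Longrightarrow> continuous_on S b \<Longrightarrow> continuous_on S c \<Longrightarrow> continuous_on S d
  \<Longrightarrow> continuous_on S (\<lambda>z. col4 (a z) (b z) (c z) (d z))"
  unfolding col4_def
  by (intro continuous_on_vec_lambda, (case_tac "i = 1"; case_tac "i = 2"; case_tac "i = 3"; simp))

lemma cont_moc[continuous_intros]: "continuous_on S a \<Longrightarrow> continuous_on S b \<Longrightarrow> continuous_on S c \<Longrightarrow> continuous_on S d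
  \<Longrightarrow> continuous_on S (\<lambda>z. mat_of_cols4 (a z) (b z) (c z) (d z))"
proof -
  assume as: "continuous_on S a" "continuous_on S b" "continuous_on S c" "continuous_on S d"
  have "continuous_on S (\<lambda>z. (if j = 1 then a z else if j = 2 then b z else if j = 3 then c z else d z) $ i)" for i j :: 4
    by (intro continuous_on_component, (cases "j = 1"; cases "j = 2"; cases "j = 3"; simp add: as))
  then show ?thesis unfolding mat_of_cols4_def
    by (intro continuous_on_vec_lambda)
qed

lemma cont_mv: "continuous_on S A \<Longrightarrow> continuous_on S x \<Longrightarrow> continuous_on S (\<lambda>z. (A z :: real^'n^'m) *v x z)"
  unfolding matrix_vector_mult_def
  by (intro continuous_on_vec_lambda continuous_intros) auto

lemma cont_mm: "continuous_on S A \<Longrightarrow> continuous_on S B \<Longrightarrow> continuous_on S (\<lambda>z. (A z :: real^'n^'m) ** (B z :: real^'k^'n))"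
  unfolding matrix_matrix_mult_def
  by (intro continuous_on_vec_lambda continuous_intros) auto

lemma cont_det: "continuous_on S A \<Longrightarrow> continuous_on S (\<lambda>z. det (A z :: real^'n^'n))"
  unfolding det_def
  by (intro continuous_intros) auto

lemma inv_props: fixes A :: "real^'n^'n" assumes "det A \<noteq> 0"
  shows "A ** matrix_inv A = mat 1" "matrix_inv A ** A = mat 1"
proof -
  have "invertible A" using assms invertible_det_nz by blast
  then have "\<exists>A'. A ** A' = mat 1 \<and> A' ** A = mat 1" unfolding invertible_def by blast
  then have "A ** matrix_inv A = mat 1 \<and> matrix_inv A ** A = mat 1"
    unfolding matrix_inv_def by (rule someI_ex)
  then show "A ** matrix_inv A = mat 1" "matrix_inv A ** A = mat 1" by auto
qed

lemma inv_apply: fixes A :: "real^'n^'n" assumes "det A \<noteq> 0"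
  shows "A *v (matrix_inv A *v b) = b"
  by (simp add: matrix_vector_mul_assoc inv_props[OF assms])

lemma inv_nth: "(matrix_inv A *v axis l 1) $ k = matrix_inv A $ k $ (l::'n::finite)" for A :: "real^'n^'n"
  by (simp add: matrix_vector_mult_def axis_def if_distrib cong: if_cong)

lemma inj_det: fixes A :: "real^'n^'n" assumes "det A \<noteq> 0" "A *v x = 0" shows "x = 0"
proof -
  have "x = (matrix_inv A ** A) *v x" using inv_props[OF assms(1)] by simp
  also have "\<dots> = 0" by (simp add: matrix_vector_mul_assoc[symmetric] assms(2))
  finally show ?thesis .
qed

lemma inv_entry_cramer: fixes A :: "real^'n^'n" assumes "det A \<noteq> 0"
  shows "matrix_inv A $ k $ l = det (\<chi> i j. if j = k then axis l 1 $ i else A $ i $ j) / det A"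
proof -
  have "A *v (matrix_inv A *v axis l 1) = axis l 1" by (rule inv_apply[OF assms])
  then have "matrix_inv A *v axis l 1 = (\<chi> k. det (\<chi> i j. if j = k then axis l 1 $ i else A $ i $ j) / det A)"
    using cramer[OF assms] by blast
  then have "(matrix_inv A *v axis l 1) $ k = det (\<chi> i j. if j = k then axis l 1 $ i else A $ i $ j) / det A"
    by simp
  then show ?thesis by (simp only: inv_nth)
qed

lemma cont_inv_entry: fixes A :: "'a::topological_space \<Rightarrow> real^'n^'n"
  assumes "continuous_on S A" "\<And>z. z \<in> S \<Longrightarrow> det (A z) \<noteq> 0"
  shows "continuous_on S (\<lambda>z. matrix_inv (A z) $ k $ l)"
proof -
  have c: "continuous_on S (\<lambda>z. (\<chi> i j. if j = k then axis l 1 $ i else A z $ i $ j) :: real^'n^'n)"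
  proof (intro continuous_on_vec_lambda)
    fix i j show "continuous_on S (\<lambda>z. if j = k then axis l 1 $ i else A z $ i $ j)"
      by (cases "j = k") (auto intro!: continuous_intros assms(1))
  qed
  have "continuous_on S (\<lambda>z. det (\<chi> i j. if j = k then axis l 1 $ i else A z $ i $ j) / det (A z))"
    by (intro continuous_on_divide cont_det c assms(1)) (use assms(2) in auto)
  then show ?thesis
    by (rule continuous_on_cong[THEN iffD1, rotated 2]) (auto simp: inv_entry_cramer assms(2))
qed

lemma coer:
  fixes M :: "'a::metric_space \<Rightarrow> real^'n^'n"
  assumes S: "compact S" and M: "continuous_on S M" and inj: "\<And>z x. z \<in> S \<Longrightarrow> M z *v x = 0 \<Longrightarrow> x = 0"
  shows "\<exists>c>0. \<forall>z\<in>S. \<forall>x. c * norm x \<le> norm (M z *v x)"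
proof (cases "S = {}")
  case True then show ?thesis by (intro exI[of _ 1]) auto
next
  case False
  let ?T = "S \<times> sphere (0::real^'n) 1"
  have cT: "compact ?T" by (intro compact_Times S compact_sphere)
  have "norm (axis undefined 1 :: real^'n) = 1" by simp
  then have neT: "?T \<noteq> {}" using False by auto
  have cf: "continuous_on ?T (\<lambda>p. norm (M (fst p) *v snd p))"
    by (intro continuous_intros cont_mv continuous_on_compose2[OF M]) auto
  obtain p where p: "p \<in> ?T" "\<And>q. q \<in> ?T \<Longrightarrow> norm (M (fst p) *v snd p) \<le> norm (M (fst q) *v snd q)"
    using continuous_attains_inf[OF cT neT cf] by blast
  define c where "c = norm (M (fst p) *v snd p)"
  have "c > 0"
  proof -
    have "snd p \<noteq> 0" using p(1) by auto
    then have "M (fst p) *v snd p \<noteq> 0" using inj p(1) by auto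
    then show ?thesis unfolding c_def by simp
  qed
  moreover have "c * norm x \<le> norm (M z *v x)" if z: "z \<in> S" for z x
  proof (cases "x = 0")
    case True then show ?thesis by simp
  next
    case False
    let ?u = "x /\<^sub>R norm x"
    have "(z, ?u) \<in> ?T" using z False by (simp add: norm_divide)
    then have "c \<le> norm (M z *v ?u)" using p(2) unfolding c_def by fastforce
    also have "M z *v ?u = (1 / norm x) *\<^sub>R (M z *v x)"
      by (simp add: matrix_vector_mult_scaleR divide_inverse_commute)
    finally have "c \<le> norm (M z *v x) / norm x" by simp
    then show ?thesis using False by (simp add: field_simps)
  qed
  ultimately show ?thesis by blast
qed

definition cv :: "complex \<Rightarrow> complex \<Rightarrow> real^4" where
  "cv z z' = col4 (Re z) (Im z) (Re z') (Im z')"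

definition Kf where
  "Kf p1 p2 p3 q3 p4 q4 \<alpha> t w = mat_of_cols4 (cv (V1 p1 \<alpha> t) (W1 p1 \<alpha> t)) (cv (V2 p2 \<alpha> t) (W2 p2 \<alpha> t))
     (cv (V3 p3 q3 \<alpha> t w) (W3 p3 q3 \<alpha> t w)) (cv (\<i> * V3 p4 q4 \<alpha> t w) (\<i> * W3 p4 q4 \<alpha> t w))"

definition HL where
  "HL p1 p2 p3 p4 y = mat_of_cols4 (cv (HV1 p1 y) (HW1 p1 y)) (cv (HV2 p2 y) (HW1 p2 y))
     (cv (HV3 p3 y) (HW3 p3 y)) (cv (\<i> * HV3 p4 y) (\<i> * HW3 p4 y))"

definition Dr :: "real \<Rightarrow> 4 \<Rightarrow> real" where "Dr s r = (if r = 3 \<or> r = 4 then s else 1)"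

lemma Re_ofr: "Re (of_real s * z) = s * Re z" "Im (of_real s * z) = s * Im z" by simp_all

lemma sol_col_scale:
  assumes "f y = V" "of_real s * vector_derivative f (at y) = W"
  shows "sol_col f y $ r * Dr s r = cv V W $ r"
proof -
  have "Re W = s * Re (vector_derivative f (at y))" "Im W = s * Im (vector_derivative f (at y))"
    using assms(2) by (auto simp flip: assms(2))
  then show ?thesis using assms(1) exhaust_4[of r]
    unfolding sol_col_def cv_def Dr_def by auto
qed

lemma sol_col_scale2:
  assumes "of_real d * f y = V" "of_real (s*d) * vector_derivative f (at y) = W"
  shows "sol_col f y $ r * Dr s r * d = cv V W $ r"
proof -
  have "Re W = (s*d) * Re (vector_derivative f (at y))" "Im W = (s*d) * Im (vector_derivative f (at y))"
    using assms(2) by (auto simp flip: assms(2))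
  moreover have "Re V = d * Re (f y)" "Im V = d * Im (f y)"
    using assms(1) by (auto simp flip: assms(1))
  ultimately show ?thesis using exhaust_4[of r]
    unfolding sol_col_def cv_def Dr_def by auto
qed

lemma KR:
  assumes "y < 1" "\<alpha> \<noteq> 0"
  shows "fund_mat (fR1 p1 \<alpha>) (fR2 p2 \<alpha>) (fR3 p3 q3 \<alpha>) (fR4 p4 q4 \<alpha>) y $ r $ c * Dr ((1-y)^2) r
     = Kf p1 p2 p3 q3 p4 q4 \<alpha> (1-y) (exp (\<i> * of_real (phi y \<alpha>))) $ r $ c"
proof -
  have "c = 1 \<or> c = 2 \<or> c = 3 \<or> c = 4" using exhaust_4 by blast
  then show ?thesis
    unfolding fund_mat_def Kf_def
    using sol_col_scale[OF fR1_V fR1_W, of p1 \<alpha> y r] sol_col_scale[OF fR2_V fR2_W, of p2 \<alpha> y r]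
      sol_col_scale[OF fR3_V fR3_W[OF assms], of p3 q3 r] sol_col_scale[OF fR4_V fR4_W[OF assms], of p4 q4 r]
    by auto
qed

lemma KL:
  assumes "y > -1"
  shows "fund_mat (gL1 p1) (gL2 p2) (gL3 p3) (gL4 p4) y $ r $ c * Dr (1+y) r * Dr (1+y) c
     = HL p1 p2 p3 p4 y $ r $ c"
proof -
  have a: "sol_col (gL1 p1) y $ r * Dr (1+y) r * 1 = cv (HV1 p1 y) (HW1 p1 y) $ r"
    by (rule sol_col_scale2) (use gL1_V gL1_W in auto)
  have b: "sol_col (gL2 p2) y $ r * Dr (1+y) r * 1 = cv (HV2 p2 y) (HW1 p2 y) $ r"
    by (rule sol_col_scale2) (use gL2_V gL2_W in auto)
  have c: "sol_col (gL3 p3) y $ r * Dr (1+y) r * (1+y) = cv (HV3 p3 y) (HW3 p3 y) $ r"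
    by (rule sol_col_scale2) (use gL3_V[OF assms] gL3_W[OF assms] in \<open>auto simp: power2_eq_square\<close>)
  have d: "sol_col (gL4 p4) y $ r * Dr (1+y) r * (1+y) = cv (\<i> * HV3 p4 y) (\<i> * HW3 p4 y) $ r"
    by (rule sol_col_scale2) (use gL4_V[OF assms] gL4_W[OF assms] in \<open>auto simp: power2_eq_square\<close>)
  have "c = 1 \<or> c = 2 \<or> c = 3 \<or> c = 4" using exhaust_4 by blast
  then show ?thesis
    unfolding fund_mat_def HL_def using a b c d by (auto simp: Dr_def)
qed

lemma cont_Kf:
  assumes "continuous_on S \<alpha>" "continuous_on S t" "continuous_on S w" "\<And>z. z \<in> S \<Longrightarrow> \<alpha> z \<noteq> 0"
  shows "continuous_on S (\<lambda>z. Kf p1 p2 p3 q3 p4 q4 (\<alpha> z) (t z) (w z))"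
  unfolding Kf_def cv_def V1_def W1_def V2_def W2_def V3_def W3_def Ufn_def dUfn_def bet_def gam_def Phi_def PP_def dPP_def
  by (intro continuous_intros assms) (auto simp: assms)

lemma cont_HL: "continuous_on S (\<lambda>y. HL p1 p2 p3 p4 y)"
  unfolding HL_def cv_def HV1_def HW1_def HV2_def HV3_def HW3_def QQ_def dQQ_def
  by (intro continuous_intros)

lemma K0: "Kf p1 p2 p3 q3 p4 q4 \<alpha> 0 w = mat_of_cols4 (col4 1 0 0 0) (col4 0 1 0 0) (cv 0 (-4*\<alpha>*\<i>*w)) (cv 0 (4*\<alpha>*w))"
  unfolding Kf_def cv_def V1_def W1_def V2_def W2_def V3_def W3_def Ufn_def dUfn_def Phi_def
  by (simp add: algebra_simps)

lemma norm4: "norm (v::real^4)^2 = v$1^2+v$2^2+v$3^2+v$4^2"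
  by (simp add: norm_vec_def L2_set_def sum_4 sum_nonneg)

lemma K0_bound:
  assumes "norm w = 1"
  shows "min 1 (4*\<bar>\<alpha>\<bar>) * norm x \<le> norm (Kf p1 p2 p3 q3 p4 q4 \<alpha> 0 w *v x)"
proof -
  let ?v = "Kf p1 p2 p3 q3 p4 q4 \<alpha> 0 w *v x"
  have w2: "Re w ^ 2 + Im w ^ 2 = 1" using assms by (metis cmod_power2 power_one)
  have v: "?v $ 1 = x$1" "?v $ 2 = x$2" "?v $ 3 = 4*\<alpha>*Im w * x$3 + 4*\<alpha>*Re w * x$4"
       "?v $ 4 = 4*\<alpha>*Im w * x$4 - 4*\<alpha>*Re w * x$3"
    unfolding K0 by (simp_all add: matrix_vector_mult_def sum_4 cv_def)
  have "norm ?v ^ 2 = x$1^2 + x$2^2 + 16*\<alpha>^2 * (Re w ^ 2 + Im w ^ 2) * (x$3^2 + x$4^2)"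
    unfolding norm4 v by (simp add: power2_eq_square algebra_simps)
  also have "\<dots> = x$1^2 + x$2^2 + 16*\<alpha>^2 * (x$3^2 + x$4^2)" using w2 by simp
  finally have e: "norm ?v ^ 2 = x$1^2 + x$2^2 + (4*\<bar>\<alpha>\<bar>)^2 * (x$3^2 + x$4^2)" by (simp add: power2_eq_square)
  let ?m = "min 1 (4*\<bar>\<alpha>\<bar>)"
  have m0: "0 \<le> ?m" by simp
  have mm: "?m \<le> 1" "?m \<le> 4*\<bar>\<alpha>\<bar>" by auto
  have m1: "?m^2 \<le> 1" "?m^2 \<le> (4*\<bar>\<alpha>\<bar>)^2"
    using power_mono[OF mm(1) m0, of 2] power_mono[OF mm(2) m0, of 2] by auto
  have "(?m * norm x)^2 = ?m^2 * x$1^2 + ?m^2 * x$2^2 + ?m^2 * (x$3^2 + x$4^2)"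
    by (simp add: power_mult_distrib norm4 algebra_simps)
  also have "\<dots> \<le> x$1^2 + x$2^2 + (4*\<bar>\<alpha>\<bar>)^2 * (x$3^2 + x$4^2)"
    by (intro add_mono mult_right_mono m1 mult_left_le_one_le) auto
  finally have "(?m * norm x)^2 \<le> norm ?v ^ 2" using e by simp
  then show ?thesis by (rule power2_le_imp_le) simp
qed

lemma HL_m1: assumes "HL p1 p2 p3 p4 (-1) *v x = 0" shows "x = 0"
proof -
  let ?v = "HL p1 p2 p3 p4 (-1) *v x"
  have "?v $ 1 = x$1 + x$3" "?v $ 2 = x$2 + x$4" "?v $ 3 = - x$3" "?v $ 4 = - x$4"
    unfolding HL_def cv_def HV1_def HW1_def HV2_def HV3_def HW3_def
    by (simp_all add: matrix_vector_mult_def sum_4)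
  then show ?thesis using assms by (simp add: vec_eq_iff forall_4)
qed

lemma unit_bound: fixes A :: "real^'n^'n"
  assumes "\<And>x. norm x = 1 \<Longrightarrow> c \<le> norm (A *v x)"
  shows "c * norm x \<le> norm (A *v x)"
proof (cases "x = 0")
  case True then show ?thesis by simp
next
  case False
  let ?u = "x /\<^sub>R norm x"
  have "c \<le> norm (A *v ?u)" using assms False by (simp add: norm_divide)
  also have "A *v ?u = (1 / norm x) *\<^sub>R (A *v x)"
    by (simp add: matrix_vector_mult_scaleR divide_inverse_commute)
  finally have "c \<le> norm (A *v x) / norm x" by simp
  then show ?thesis using False by (simp add: field_simps)
qed

lemma scale_mv_row: fixes A K :: "real^'n^'n" assumes "\<And>r c. A $ r $ c * d r = K $ r $ c"
  shows "K *v x = (\<chi> r. d r * (A *v x) $ r)"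
  unfolding matrix_vector_mult_def vec_eq_iff
  by (auto simp: sum_distrib_left assms[symmetric] mult_ac intro!: sum.cong)

lemma scale_mv_both: fixes A K :: "real^'n^'n" assumes "\<And>r c. A $ r $ c * d r * d c = K $ r $ c"
  shows "K *v u = (\<chi> r. d r * (A *v (\<chi> c. d c * u $ c)) $ r)"
  unfolding matrix_vector_mult_def vec_eq_iff
  by (auto simp: sum_distrib_left assms[symmetric] mult_ac intro!: sum.cong)

lemma cont_phi: assumes "continuous_on S f" "continuous_on S g" "\<And>z. z \<in> S \<Longrightarrow> f z < 1 \<and> g z \<noteq> 0"
  shows "continuous_on S (\<lambda>z. phi (f z) (g z))"
  unfolding phi_def using assms(1,2) by (intro continuous_intros) (auto dest!: assms(3))

lemma cont_Dr: "continuous_on S s \<Longrightarrow> continuous_on S (\<lambda>z. Dr (s z) r)"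
  unfolding Dr_def by (cases "r = 3 \<or> r = 4") auto

lemma Dr_nz: "s \<noteq> 0 \<Longrightarrow> Dr s r \<noteq> 0" unfolding Dr_def by auto

lemma cont_unscale: assumes "continuous_on S K" "continuous_on S s" "continuous_on S e"
   "\<And>z. z\<in>S \<Longrightarrow> s z \<noteq> 0 \<and> e z \<noteq> 0"
  shows "continuous_on S (\<lambda>z. (\<chi> r c. K z $ r $ c / (Dr (s z) r * Dr (e z) c)) :: real^4^4)"
proof (intro continuous_on_vec_lambda)
  fix r c
  show "continuous_on S (\<lambda>z. K z $ r $ c / (Dr (s z) r * Dr (e z) c))"
    using assms by (intro continuous_intros cont_Dr) (auto simp: Dr_nz)
qed

lemma Y_facts: assumes "inY g"
  shows "\<And>y. y \<in> {-1<..<1} \<Longrightarrow> (1+y)*(1-y)^2 * cmod (g y) \<le> Ynorm g"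
    and "0 \<le> Ynorm g" and "continuous_on {-1<..<1} g"
proof -
  obtain h where h: "continuous_on {-1..1} h" "\<And>y. y\<in>{-1<..<1} \<Longrightarrow> h y = of_real ((1 + y) * (1 - y)^2) * g y"
    using assms unfolding inY_def by blast
  show "continuous_on {-1<..<1} g" using assms unfolding inY_def by blast
  have "compact (h ` {-1..1})" by (intro compact_continuous_image h(1) compact_Icc)
  then obtain B where B: "\<And>y. y \<in> {-1..1} \<Longrightarrow> norm (h y) \<le> B"
    using compact_imp_bounded bounded_iff by (metis image_eqI)
  have e: "(1+y)*(1-y)^2 * cmod (g y) = norm (h y)" if "y \<in> {-1<..<1}" for y
  proof -
    have "norm (h y) = \<bar>(1+y)*(1-y)^2\<bar> * cmod (g y)" unfolding h(2)[OF that] by (simp only: norm_mult norm_of_real)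
    then show ?thesis using that by simp
  qed
  have bdd: "bdd_above ((\<lambda>y. (1 + y) * (1 - y)^2 * cmod (g y)) ` {-1<..<1})"
    by (rule bdd_aboveI2[where M=B]) (auto simp: e intro!: B)
  show le: "(1+y)*(1-y)^2 * cmod (g y) \<le> Ynorm g" if "y \<in> {-1<..<1}" for y
    unfolding Ynorm_def by (rule cSUP_upper[OF that bdd])
  have "0 \<le> (1+0)*(1-0)^2 * cmod (g (0::real))" by simp
  also have "\<dots> \<le> Ynorm g" by (rule le) simp
  finally show "0 \<le> Ynorm g" .
qed

lemma int_open:
  fixes f :: "real \<Rightarrow> real"
  assumes c: "continuous_on {a<..<b} f" and B: "\<And>x. x \<in> {a<..<b} \<Longrightarrow> \<bar>f x\<bar> \<le> B" and ab: "a \<le> b"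
  shows "f integrable_on {a..b}" "\<bar>integral {a..b} f\<bar> \<le> B * (b - a)"
proof -
  have ci: "(\<lambda>x. B) integrable_on {a<..<b}"
    using integrable_on_open_interval_real integrable_const_ivl by blast
  have io: "f integrable_on {a<..<b}"
    by (rule measurable_bounded_by_integrable_imp_integrable[OF continuous_imp_measurable_on_sets_lebesgue[OF c] ci])
       (use B in auto)
  then show "f integrable_on {a..b}" using integrable_on_open_interval_real by blast
  have "norm (integral {a<..<b} f) \<le> integral {a<..<b} (\<lambda>x. B)"
    by (rule integral_norm_bound_integral[OF io ci]) (use B in auto)
  also have "\<dots> = B * (b - a)" using ab by (simp flip: integral_open_interval_real)
  finally show "\<bar>integral {a..b} f\<bar> \<le> B * (b - a)" by (simp add: integral_open_interval_real)
qed

lemma cont_param_int: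
  fixes F :: "real \<Rightarrow> real \<Rightarrow> real"
  assumes c: "\<And>p. p \<in> P \<Longrightarrow> continuous_on {a<..<b} (F p)"
    and cp: "\<And>x. x \<in> {a<..<b} \<Longrightarrow> continuous_on P (\<lambda>p. F p x)"
    and B: "\<And>p x. p \<in> P \<Longrightarrow> x \<in> {a<..<b} \<Longrightarrow> \<bar>F p x\<bar> \<le> B" and ab: "a \<le> b"
  shows "continuous_on P (\<lambda>p. integral {a..b} (F p))"
proof (rule continuous_on_sequentiallyI)
  fix u p assume u: "\<forall>n. u n \<in> P" and p: "p \<in> P" and lim: "u \<longlonglongrightarrow> p"
  have ci: "(\<lambda>x. B) integrable_on {a<..<b}"
    using integrable_on_open_interval_real integrable_const_ivl by blast
  have fi: "F q integrable_on {a<..<b}" if "q \<in> P" for q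
    using int_open(1)[OF c[OF that] B[OF that] ab] integrable_on_open_interval_real by blast
  have "(\<lambda>n. integral {a<..<b} (F (u n))) \<longlonglongrightarrow> integral {a<..<b} (F p)"
  proof (rule dominated_convergence(2)[OF fi ci])
    show "u n \<in> P" for n using u by blast
    show "norm (F (u n) x) \<le> B" if "x \<in> {a<..<b}" for n x using B u that by auto
    show "(\<lambda>n. F (u n) x) \<longlonglongrightarrow> F p x" if "x \<in> {a<..<b}" for x
      by (rule continuous_on_tendsto_compose[OF cp[OF that] lim p]) (use u in auto)
  qed
  then show "(\<lambda>n. integral {a..b} (F (u n))) \<longlonglongrightarrow> integral {a..b} (F p)"
    by (simp add: integral_open_interval_real)
qed

theorem lemma3p29:
  fixes as :: real and J :: "real set"
    and FL :: "real \<Rightarrow> real^4^4" and FR :: "real \<Rightarrow> real \<Rightarrow> real^4^4"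
  assumes "as \<noteq> 0" and "compact J" and "- as \<notin> J"
    and "admissible_fund as J FL FR"
  shows "(\<forall>g a k. inY g \<longrightarrow> a \<in> J \<longrightarrow> k \<in> {3, 4} \<longrightarrow>
              alphaF FL FR a g k integrable_on {-1..1})
       \<and> (\<exists>C>0. \<forall>g a. inY g \<longrightarrow> a \<in> J \<longrightarrow> \<bar>psiF FL FR a g\<bar> \<le> C * Ynorm g)
       \<and> (\<forall>g. inY g \<longrightarrow> continuous_on J (\<lambda>a. psiF FL FR a g))"
proof -
  note adm = assms(4)[unfolded admissible_fund_def admissible_right_def admissible_left_def]
  obtain p1 p2 p3 q3 p4 q4 where FRd: "\<And>y a. y \<in> {0..<1} \<Longrightarrow> a \<in> J \<Longrightarrow>
        FR y a = fund_mat (fR1 p1 (as + a)) (fR2 p2 (as + a)) (fR3 p3 q3 (as + a)) (fR4 p4 q4 (as + a)) y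
        \<and> det (FR y a) \<noteq> 0"
    using adm by blast
  obtain l1 l2 l3 l4 where FLd: "\<And>y. y \<in> {-1<..0} \<Longrightarrow>
        FL y = fund_mat (gL1 l1) (gL2 l2) (gL3 l3) (gL4 l4) y \<and> det (FL y) \<noteq> 0"
    using adm by blast
  have M31: "\<And>a. a \<in> J \<Longrightarrow> MF FL FR a $ 3 $ 1 \<noteq> 0" using adm by blast
  have anz: "\<And>a. a \<in> J \<Longrightarrow> as + a \<noteq> 0" using assms(3) by (metis add.commute add_eq_0_iff)
  define Kh where "Kh = (\<lambda>z::real\<times>real. Kf p1 p2 p3 q3 p4 q4 (as + snd z) (1 - fst z) (exp (\<i> * of_real (phi (fst z) (as + snd z)))))"
  define HLh where "HLh = HL l1 l2 l3 l4"
  have FRrel: "FR y a $ r $ c * Dr ((1-y)^2) r = Kh (y,a) $ r $ c" if "y \<in> {0..<1}" "a \<in> J" for y a r c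
    using FRd[OF that] KR[of y "as + a"] that anz unfolding Kh_def by auto
  have FLrel: "FL y $ r $ c * Dr (1+y) r * Dr (1+y) c = HLh y $ r $ c" if "y \<in> {-1<..0}" for y r c
    using FLd[OF that] KL[of y] that unfolding HLh_def by auto
  have Khcont: "continuous_on ({..<1} \<times> J) Kh"
    unfolding Kh_def
    by (intro cont_Kf continuous_intros cont_phi) (auto simp: anz)
  have HLcont: "continuous_on S HLh" for S unfolding HLh_def by (rule cont_HL)
  have FRcont: "continuous_on ({0..<1} \<times> J) (\<lambda>z. FR (fst z) (snd z))"
  proof -
    have c: "continuous_on ({0..<1} \<times> J) (\<lambda>z. (\<chi> r c. Kh z $ r $ c / (Dr ((1 - fst z)^2) r * Dr 1 c)) :: real^4^4)"
      by (intro cont_unscale continuous_intros continuous_on_subset[OF Khcont]) auto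
    show ?thesis
    proof (rule continuous_on_cong[THEN iffD1, OF refl _ c])
      fix z :: "real \<times> real" assume z: "z \<in> {0..<1} \<times> J"
      obtain y a where ya: "z = (y,a)" "y \<in> {0..<1}" "a \<in> J" using z by auto
      have "FR y a $ r $ c = Kh (y,a) $ r $ c / (Dr ((1 - y)^2) r * Dr 1 c)" for r c
      proof -
        have "Dr ((1 - y)^2) r \<noteq> 0" using Dr_nz ya(2) by auto
        moreover have "Dr 1 c = 1" by (simp add: Dr_def)
        ultimately show ?thesis using FRrel[OF ya(2,3), of r c] by (simp add: eq_divide_eq)
      qed
      then show "(\<chi> r c. Kh z $ r $ c / (Dr ((1 - fst z)^2) r * Dr 1 c)) = FR (fst z) (snd z)"
        by (simp add: vec_eq_iff ya(1))
    qed
  qed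
  have FLcont: "continuous_on {-1<..0} FL"
  proof -
    have c: "continuous_on {-1<..0} (\<lambda>y. (\<chi> r c. HLh y $ r $ c / (Dr (1+y) r * Dr (1+y) c)) :: real^4^4)"
      by (intro cont_unscale continuous_intros HLcont) auto
    show ?thesis
    proof (rule continuous_on_cong[THEN iffD1, OF refl _ c])
      fix y :: real assume y: "y \<in> {-1<..0}"
      have "FL y $ r $ c = HLh y $ r $ c / (Dr (1+y) r * Dr (1+y) c)" for r c
      proof -
        have "Dr (1+y) r \<noteq> 0" "Dr (1+y) c \<noteq> 0" using Dr_nz y by auto
        then show ?thesis using FLrel[OF y, of r c] by (simp add: eq_divide_eq)
      qed
      then show "(\<chi> r c. HLh y $ r $ c / (Dr (1+y) r * Dr (1+y) c)) = FL y"
        by (simp add: vec_eq_iff)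
    qed
  qed
  have detFL: "det (FL y) \<noteq> 0" if "y \<in> {-1<..0}" for y using FLd[OF that] by blast
  have detFR: "det (FR y a) \<noteq> 0" if "y \<in> {0..<1}" "a \<in> J" for y a using FRd[OF that] by blast
  have detinv: "det (matrix_inv A) \<noteq> 0" if "det A \<noteq> 0" for A :: "real^4^4"
  proof -
    have "det (matrix_inv A) * det A = 1" using inv_props(2)[OF that] by (metis det_I det_mul)
    then show ?thesis by auto
  qed
  have MFeq: "MF FL FR a = matrix_inv (FL 0) ** FR 0 a" for a unfolding MF_def ..
  have FR0cont: "continuous_on J (\<lambda>a. FR 0 a)"
    by (rule continuous_on_compose2[OF FRcont, where f="\<lambda>a. (0,a)", simplified]) (auto intro: continuous_intros)
  have MFcont: "continuous_on J (MF FL FR)"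
    unfolding MFeq by (intro cont_mm continuous_intros FR0cont)
  have MFdet: "det (MF FL FR a) \<noteq> 0" if "a \<in> J" for a
    unfolding MFeq det_mul using detinv[OF detFL[of 0]] detFR[of 0 a] that by auto
  obtain cM where cM: "cM > 0" "\<And>a x. a \<in> J \<Longrightarrow> cM * norm x \<le> norm (MF FL FR a *v x)"
    using coer[OF assms(2) MFcont] inj_det[OF MFdet] by blast
  have HLinj: "x = 0" if "z \<in> {-1..0}" "HLh z *v x = 0" for z x
  proof (cases "z = -1")
    case True then show ?thesis using that HL_m1 unfolding HLh_def by blast
  next
    case False
    then have z: "z \<in> {-1<..0}" using that by auto
    let ?v = "\<chi> c. Dr (1+z) c * x $ c"
    have e: "HLh z *v x = (\<chi> r. Dr (1+z) r * (FL z *v ?v) $ r)"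
      by (rule scale_mv_both) (rule FLrel[OF z])
    have "(FL z *v ?v) $ r = 0" for r
      using that(2) unfolding e vec_eq_iff using Dr_nz[of "1+z" r] z by auto
    then have "FL z *v ?v = 0" by (simp add: vec_eq_iff)
    then have "?v = 0" using inj_det detFL[OF z] by blast
    then show ?thesis using Dr_nz[of "1+z"] z by (auto simp: vec_eq_iff)
  qed
  obtain cL where cL: "cL > 0" "\<And>z x. z \<in> {-1..0} \<Longrightarrow> cL * norm x \<le> norm (HLh z *v x)"
    using coer[of "{-1..0}" HLh, OF compact_Icc HLcont] HLinj by blast
  obtain m where m: "m > 0" "\<And>a. a \<in> J \<Longrightarrow> m \<le> \<bar>as + a\<bar>"
  proof (cases "J = {}")
    case True then show ?thesis using that[of 1] by auto
  next
    case False
    have "continuous_on J (\<lambda>a. \<bar>as + a\<bar>)" by (intro continuous_intros)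
    then obtain a0 where "a0 \<in> J" "\<And>a. a \<in> J \<Longrightarrow> \<bar>as + a0\<bar> \<le> \<bar>as + a\<bar>"
      using continuous_attains_inf[OF assms(2) False] by blast
    then show ?thesis using that[of "\<bar>as + a0\<bar>"] anz by auto
  qed
  define \<mu> where "\<mu> = min 1 (4*m)"
  have \<mu>: "\<mu> > 0" "\<And>a. a \<in> J \<Longrightarrow> \<mu> \<le> min 1 (4*\<bar>as + a\<bar>)"
    unfolding \<mu>_def using m by (auto simp: min_le_iff_disj)
  define Z where "Z = {0..1::real} \<times> J \<times> sphere (0::complex) 1 \<times> sphere (0::real^4) 1"
  define G where "G = (\<lambda>z::real \<times> real \<times> complex \<times> (real^4).
     norm (Kf p1 p2 p3 q3 p4 q4 (as + fst (snd z)) (fst z) (fst (snd (snd z))) *v snd (snd (snd z))))"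
  have Gcont: "continuous_on Z G"
    unfolding G_def Z_def
    by (intro continuous_intros cont_mv cont_Kf) (auto simp: anz)
  have cZ: "compact Z" unfolding Z_def by (intro compact_Times compact_Icc assms(2) compact_sphere)
  obtain \<delta> where \<delta>: "\<delta> > 0" "\<And>z z'. z \<in> Z \<Longrightarrow> z' \<in> Z \<Longrightarrow> dist z' z < \<delta> \<Longrightarrow> dist (G z') (G z) < \<mu>/2"
    using compact_uniformly_continuous[OF Gcont cZ] \<mu>(1) unfolding uniformly_continuous_on_def
    by (metis half_gt_zero)
  have small: "\<mu>/2 \<le> norm (Kh (y,a) *v x)" if "y \<in> {0..<1}" "1 - y < \<delta>" "a \<in> J" "norm x = 1" for y a x
  proof -
    define E where "E = exp (\<i> * of_real (phi y (as + a)))"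
    have nE: "norm E = 1" unfolding E_def by (rule norm_exp_i_times)
    let ?z = "(1-y, a, E, x)" and ?zo = "(0, a, E, x)"
    have zZ: "?z \<in> Z" "?zo \<in> Z" unfolding Z_def using that nE by auto
    have "dist ?z ?zo = sqrt ((dist (1-y) 0)^2 + (sqrt ((dist a a)^2 + (sqrt ((dist E E)^2 + (dist x x)^2))^2))^2)"
      by (simp only: dist_Pair_Pair)
    also have "\<dots> = \<bar>1 - y\<bar>" by (simp add: dist_real_def)
    finally have "dist ?z ?zo = 1 - y" using that(1) by simp
    then have "dist (G ?z) (G ?zo) < \<mu>/2" using \<delta>(2)[OF zZ(2) zZ(1)] that(2) by simp
    then have "\<bar>G ?z - G ?zo\<bar> < \<mu>/2" by (simp only: dist_real_def)
    then have "G ?z - G ?zo < \<mu>/2" "G ?zo - G ?z < \<mu>/2" by (simp_all only: abs_less_iff) linarith+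
    moreover have "\<mu> \<le> G ?zo"
      using K0_bound[OF nE, of "as + a" x p1 p2 p3 q3 p4 q4] \<mu>(2)[OF that(3)] that(4) unfolding G_def by (simp add: min_le_iff_disj) linarith
    moreover have "G ?z = norm (Kh (y,a) *v x)" unfolding G_def Kh_def E_def by simp
    ultimately show ?thesis by linarith
  qed
  have Khinj: "x = 0" if zz: "z \<in> {0..1-\<delta>} \<times> J" "Kh z *v x = 0" for z x
  proof -
    obtain y a where z: "z = (y,a)" "y \<in> {0..<1}" "a \<in> J" using zz(1) \<delta>(1) by auto
    have e: "Kh z *v x = (\<chi> r. Dr ((1-y)^2) r * (FR y a *v x) $ r)"
      unfolding z(1) by (rule scale_mv_row) (rule FRrel[OF z(2,3)])
    have "(FR y a *v x) $ r = 0" for r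
      using zz(2) unfolding e vec_eq_iff using Dr_nz[of "(1-y)^2" r] z by auto
    then have "FR y a *v x = 0" by (simp add: vec_eq_iff)
    then show ?thesis using inj_det detFR[OF z(2,3)] by blast
  qed
  obtain c2 where c2: "c2 > 0" "\<And>z x. z \<in> {0..1-\<delta>} \<times> J \<Longrightarrow> c2 * norm x \<le> norm (Kh z *v x)"
    using coer[OF compact_Times[OF compact_Icc assms(2)] continuous_on_subset[OF Khcont] Khinj] \<delta>(1) by force
  define cR where "cR = min (\<mu>/2) c2"
  have cR: "cR > 0" "\<And>y a x. y \<in> {0..<1} \<Longrightarrow> a \<in> J \<Longrightarrow> cR * norm x \<le> norm (Kh (y,a) *v x)"
  proof -
    show "cR > 0" unfolding cR_def using \<mu> c2 by auto
    fix y a :: real and x :: "real^4" assume ya: "y \<in> {0..<1}" "a \<in> J"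
    show "cR * norm x \<le> norm (Kh (y,a) *v x)"
    proof (cases "1 - y < \<delta>")
      case True
      have "\<mu>/2 * norm x \<le> norm (Kh (y,a) *v x)" by (rule unit_bound) (rule small[OF ya(1) True ya(2)])
      then show ?thesis unfolding cR_def by (meson min.cobounded1 mult_right_mono norm_ge_zero order_trans)
    next
      case False
      then have "(y,a) \<in> {0..1-\<delta>} \<times> J" using ya by auto
      from c2(2)[OF this] show ?thesis unfolding cR_def by (meson min.cobounded2 mult_right_mono norm_ge_zero order_trans)
    qed
  qed
  have RIB: "\<bar>matrix_inv (FR y a) $ k $ l\<bar> \<le> (1-y)^2 / cR" if "y \<in> {0..<1}" "a \<in> J" "l \<in> {3,4}" for y a k l
  proof -
    define x where "x = matrix_inv (FR y a) *v axis l 1"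
    have Fx: "FR y a *v x = axis l 1" unfolding x_def by (rule inv_apply[OF detFR[OF that(1,2)]])
    have "Kh (y,a) *v x = (\<chi> r. Dr ((1-y)^2) r * (FR y a *v x) $ r)"
      by (rule scale_mv_row) (rule FRrel[OF that(1,2)])
    also have "\<dots> = (1-y)^2 *\<^sub>R axis l 1" unfolding Fx using that(3)
      by (auto simp: vec_eq_iff Dr_def axis_def)
    finally have "norm (Kh (y,a) *v x) = (1-y)^2" by simp
    then have "cR * norm x \<le> (1-y)^2" using cR(2)[OF that(1,2)] by metis
    then have "norm x \<le> (1-y)^2 / cR" using cR(1) by (simp add: field_simps)
    moreover have "\<bar>x $ k\<bar> \<le> norm x" by (rule component_le_norm_cart)
    ultimately show ?thesis unfolding x_def inv_nth by linarith
  qed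
  have LIB: "\<bar>matrix_inv (FL y) $ k $ l\<bar> \<le> (1+y) / cL" if "y \<in> {-1<..0}" "l \<in> {3,4}" for y k l
  proof -
    define x where "x = matrix_inv (FL y) *v axis l 1"
    have Fx: "FL y *v x = axis l 1" unfolding x_def by (rule inv_apply[OF detFL[OF that(1)]])
    define u where "u = (\<chi> c. x $ c / Dr (1+y) c)"
    have ux: "(\<chi> c. Dr (1+y) c * u $ c) = x" unfolding u_def using Dr_nz[of "1+y"] that(1) by (auto simp: vec_eq_iff)
    have "HLh y *v u = (\<chi> r. Dr (1+y) r * (FL y *v (\<chi> c. Dr (1+y) c * u $ c)) $ r)"
      by (rule scale_mv_both) (rule FLrel[OF that(1)])
    also have "\<dots> = (1+y) *\<^sub>R axis l 1" unfolding ux Fx using that(2)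
      by (auto simp: vec_eq_iff Dr_def axis_def)
    finally have "norm (HLh y *v u) = 1+y" using that(1) by simp
    then have "cL * norm u \<le> 1+y" using cL(2)[of y u] that(1) by auto
    then have nu: "norm u \<le> (1+y) / cL" using cL(1) by (simp add: field_simps)
    have "\<bar>x $ k\<bar> = \<bar>Dr (1+y) k\<bar> * \<bar>u $ k\<bar>" using ux by (metis abs_mult vec_lambda_beta)
    also have "\<dots> \<le> 1 * \<bar>u $ k\<bar>" using that(1) by (intro mult_right_mono) (auto simp: Dr_def)
    also have "\<dots> \<le> norm u" by (simp add: component_le_norm_cart)
    finally show ?thesis unfolding x_def inv_nth using nu by linarith
  qed
  define Cb where "Cb = max (1/cR) (4/(cL*cM))"
  have Cb0: "Cb \<ge> 0" unfolding Cb_def using cR(1) by (simp add: le_max_iff_disj)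
  have FB: "\<bar>matrix_inv (Ffund FL FR y a) $ k $ l\<bar> \<le> Cb * ((1+y)*(1-y)^2)"
    if y: "y \<in> {-1<..<1}" and a: "a \<in> J" and l: "l \<in> {3,4}" for y a k l
  proof (cases "y \<le> 0")
    case False
    then have F: "Ffund FL FR y a = FR y a" unfolding Ffund_def by simp
    have "\<bar>matrix_inv (FR y a) $ k $ l\<bar> \<le> (1-y)^2 / cR" using RIB[of y a l k] y a l False by auto
    also have "\<dots> = (1/cR) * (1-y)^2" by simp
    also have "\<dots> \<le> Cb * (1-y)^2" unfolding Cb_def by (intro mult_right_mono) auto
    also have "\<dots> \<le> Cb * ((1+y)*(1-y)^2)" using False Cb0 by (intro mult_left_mono) (auto intro: mult_left_le_one_le simp: mult_le_cancel_right1)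
    finally show ?thesis unfolding F .
  next
    case True
    then have y': "y \<in> {-1<..0}" using y by auto
    then have F: "Ffund FL FR y a = FL y ** MF FL FR a" unfolding Ffund_def by simp
    have dA: "det (FL y ** MF FL FR a) \<noteq> 0" using detFL[OF y'] MFdet[OF a] by (simp add: det_mul)
    define x where "x = matrix_inv (FL y ** MF FL FR a) *v axis l 1"
    have Ax: "(FL y ** MF FL FR a) *v x = axis l 1" unfolding x_def by (rule inv_apply[OF dA])
    define u where "u = MF FL FR a *v x"
    have Fu: "FL y *v u = axis l 1" using Ax unfolding u_def by (simp add: matrix_vector_mul_assoc)
    have "u = (matrix_inv (FL y) ** FL y) *v u" using inv_props(2)[OF detFL[OF y']] by simp
    also have "\<dots> = matrix_inv (FL y) *v axis l 1" by (metis matrix_vector_mul_assoc Fu)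
    finally have ue: "u $ m = matrix_inv (FL y) $ m $ l" for m by (simp add: inv_nth)
    have um: "\<bar>u $ m\<bar> \<le> (1+y)/cL" for m unfolding ue using LIB[OF y' l] .
    have "norm u \<le> (\<Sum>m\<in>UNIV. \<bar>u $ m\<bar>)" by (rule norm_le_l1_cart)
    also have "\<dots> \<le> (\<Sum>m\<in>(UNIV::4 set). (1+y)/cL)" by (intro sum_mono um)
    also have "\<dots> = 4 * ((1+y)/cL)" by (simp add: sum_4)
    finally have nu: "norm u \<le> 4 * ((1+y)/cL)" .
    have "cM * norm x \<le> norm u" unfolding u_def by (rule cM(2)[OF a])
    then have "norm x \<le> norm u / cM" using cM(1) by (simp add: pos_le_divide_eq mult.commute)
    also have "\<dots> \<le> (4 * ((1+y)/cL)) / cM" by (intro divide_right_mono nu) (use cM in auto)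
    also have "\<dots> = (4/(cL*cM)) * (1+y)" by simp
    finally have nx: "norm x \<le> (4/(cL*cM)) * (1+y)" .
    have "\<bar>x $ k\<bar> \<le> norm x" by (rule component_le_norm_cart)
    also have "\<dots> \<le> Cb * (1+y)"
    proof -
      have "(4/(cL*cM)) * (1+y) \<le> Cb * (1+y)" unfolding Cb_def using y' by (intro mult_right_mono) auto
      then show ?thesis using nx by linarith
    qed
    also have "\<dots> \<le> Cb * (1+y) * (1-y)^2"
    proof -
      have h1: "1 \<le> (1-y)^2" using y' by (simp add: one_le_power)
      have h2: "0 \<le> Cb*(1+y)" using Cb0 y' by simp
      show ?thesis using mult_left_mono[OF h1 h2] by simp
    qed
    finally show ?thesis unfolding F x_def inv_nth by (simp add: mult.assoc)
  qed
  have alpha_bound: "\<bar>alphaF FL FR a g k y\<bar> \<le> 2 * Cb * Ynorm g"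
    if g: "inY g" and a: "a \<in> J" and y: "y \<in> {-1<..<1}" for g a k y
  proof -
    let ?w = "(1+y)*(1-y)^2"
    have w0: "?w \<ge> 0" using y by simp
    have b3: "\<bar>matrix_inv (Ffund FL FR y a) $ k $ 3\<bar> \<le> Cb * ?w" using FB[OF y a] by simp
    have b4: "\<bar>matrix_inv (Ffund FL FR y a) $ k $ 4\<bar> \<le> Cb * ?w" using FB[OF y a] by simp
    have "\<bar>alphaF FL FR a g k y\<bar> \<le> \<bar>matrix_inv (Ffund FL FR y a) $ k $ 3\<bar> * \<bar>Re (g y)\<bar>
        + \<bar>matrix_inv (Ffund FL FR y a) $ k $ 4\<bar> * \<bar>Im (g y)\<bar>"
      unfolding alphaF_def abs_mult[symmetric] by (rule abs_triangle_ineq)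
    also have "\<dots> \<le> (Cb * ?w) * cmod (g y) + (Cb * ?w) * cmod (g y)"
      by (intro add_mono mult_mono b3 b4 abs_Re_le_cmod abs_Im_le_cmod) (use Cb0 w0 in auto)
    also have "\<dots> = 2 * Cb * (?w * cmod (g y))" by simp
    also have "\<dots> \<le> 2 * Cb * Ynorm g" using Y_facts(1)[OF g y] Cb0 by (intro mult_left_mono) auto
    finally show ?thesis .
  qed
  have contI2: "continuous_on {0<..<1} (alphaF FL FR a g k)" if g: "inY g" and a: "a \<in> J" for g a k
  proof -
    have cF: "continuous_on {0<..<1} (\<lambda>y. FR y a)"
      by (rule continuous_on_compose2[OF FRcont, where f="\<lambda>y. (y,a)", simplified]) (auto intro!: continuous_intros simp: a)
    have ci: "continuous_on {0<..<1} (\<lambda>y. matrix_inv (FR y a) $ k $ l)" for l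
      by (rule cont_inv_entry[OF cF]) (use detFR a in auto)
    have cg: "continuous_on {0<..<1} g" using Y_facts(3)[OF g] by (rule continuous_on_subset) auto
    have "continuous_on {0<..<1} (\<lambda>y. matrix_inv (FR y a) $ k $ 3 * Re (g y) + matrix_inv (FR y a) $ k $ 4 * Im (g y))"
      by (intro continuous_intros ci cg)
    then show ?thesis by (rule continuous_on_cong[THEN iffD1, OF refl, rotated]) (auto simp: alphaF_def Ffund_def)
  qed
  have contI1: "continuous_on {-1<..<0} (alphaF FL FR a g k)" if g: "inY g" and a: "a \<in> J" for g a k
  proof -
    have cF: "continuous_on {-1<..<0} (\<lambda>y. FL y ** MF FL FR a)"
      by (intro cont_mm continuous_on_subset[OF FLcont] continuous_intros) auto
    have ci: "continuous_on {-1<..<0} (\<lambda>y. matrix_inv (FL y ** MF FL FR a) $ k $ l)" for l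
      by (rule cont_inv_entry[OF cF]) (use detFL MFdet[OF a] in \<open>auto simp: det_mul\<close>)
    have cg: "continuous_on {-1<..<0} g" using Y_facts(3)[OF g] by (rule continuous_on_subset) auto
    have "continuous_on {-1<..<0} (\<lambda>y. matrix_inv (FL y ** MF FL FR a) $ k $ 3 * Re (g y) + matrix_inv (FL y ** MF FL FR a) $ k $ 4 * Im (g y))"
      by (intro continuous_intros ci cg)
    then show ?thesis by (rule continuous_on_cong[THEN iffD1, OF refl, rotated]) (auto simp: alphaF_def Ffund_def)
  qed
  have contA2: "continuous_on J (\<lambda>a. alphaF FL FR a g k y)" if y: "y \<in> {0<..<1}" for g k y
  proof -
    have cF: "continuous_on J (\<lambda>a. FR y a)"
      by (rule continuous_on_compose2[OF FRcont, where f="\<lambda>a. (y,a)", simplified]) (use y in \<open>auto intro!: continuous_intros\<close>)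
    have ci: "continuous_on J (\<lambda>a. matrix_inv (FR y a) $ k $ l)" for l
      by (rule cont_inv_entry[OF cF]) (use detFR y in auto)
    have "continuous_on J (\<lambda>a. matrix_inv (FR y a) $ k $ 3 * Re (g y) + matrix_inv (FR y a) $ k $ 4 * Im (g y))"
      by (intro continuous_intros ci)
    then show ?thesis by (rule continuous_on_cong[THEN iffD1, OF refl, rotated]) (use y in \<open>auto simp: alphaF_def Ffund_def\<close>)
  qed
  have contA1: "continuous_on J (\<lambda>a. alphaF FL FR a g k y)" if y: "y \<in> {-1<..<0}" for g k y
  proof -
    have cF: "continuous_on J (\<lambda>a. FL y ** MF FL FR a)"
      by (intro cont_mm MFcont continuous_intros)
    have ci: "continuous_on J (\<lambda>a. matrix_inv (FL y ** MF FL FR a) $ k $ l)" for l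
      by (rule cont_inv_entry[OF cF]) (use detFL[of y] MFdet y in \<open>auto simp: det_mul\<close>)
    have "continuous_on J (\<lambda>a. matrix_inv (FL y ** MF FL FR a) $ k $ 3 * Re (g y) + matrix_inv (FL y ** MF FL FR a) $ k $ 4 * Im (g y))"
      by (intro continuous_intros ci)
    then show ?thesis by (rule continuous_on_cong[THEN iffD1, OF refl, rotated]) (use y in \<open>auto simp: alphaF_def Ffund_def\<close>)
  qed
  have Ifacts: "alphaF FL FR a g k integrable_on {-1..1} \<and> \<bar>integral {-1..1} (alphaF FL FR a g k)\<bar> \<le> 4 * Cb * Ynorm g"
    if g: "inY g" and a: "a \<in> J" for g a k
  proof -
    have bd: "\<bar>alphaF FL FR a g k x\<bar> \<le> 2 * Cb * Ynorm g" if "x \<in> {-1<..<1}" for x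
      by (rule alpha_bound[OF g a that])
    note i1 = int_open[of "-1" 0 "alphaF FL FR a g k" "2 * Cb * Ynorm g", OF contI1[OF g a]]
    note i2 = int_open[of 0 1 "alphaF FL FR a g k" "2 * Cb * Ynorm g", OF contI2[OF g a]]
    have int1: "alphaF FL FR a g k integrable_on {-1..0}" and b1: "\<bar>integral {-1..0} (alphaF FL FR a g k)\<bar> \<le> 2 * Cb * Ynorm g"
      using i1 bd by auto
    have int2: "alphaF FL FR a g k integrable_on {0..1}" and b2: "\<bar>integral {0..1} (alphaF FL FR a g k)\<bar> \<le> 2 * Cb * Ynorm g"
      using i2 bd by auto
    have int: "alphaF FL FR a g k integrable_on {-1..1}" by (rule Henstock_Kurzweil_Integration.integrable_combine[OF _ _ int1 int2]) auto
    have "integral {-1..0} (alphaF FL FR a g k) + integral {0..1} (alphaF FL FR a g k) = integral {-1..1} (alphaF FL FR a g k)"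
      by (rule Henstock_Kurzweil_Integration.integral_combine[OF _ _ int]) auto
    then have "\<bar>integral {-1..1} (alphaF FL FR a g k)\<bar> \<le> 4 * Cb * Ynorm g" using b1 b2 by linarith
    then show ?thesis using int by blast
  qed
  have Icont: "continuous_on J (\<lambda>a. integral {-1..1} (alphaF FL FR a g k))" if g: "inY g" for g k
  proof -
    have c1: "continuous_on J (\<lambda>a. integral {-1..0} (alphaF FL FR a g k))"
      by (rule cont_param_int[OF contI1[OF g] contA1 alpha_bound[OF g]]) auto
    have c2: "continuous_on J (\<lambda>a. integral {0..1} (alphaF FL FR a g k))"
      by (rule cont_param_int[OF contI2[OF g] contA2 alpha_bound[OF g]]) auto
    have "continuous_on J (\<lambda>a. integral {-1..0} (alphaF FL FR a g k) + integral {0..1} (alphaF FL FR a g k))"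
      by (intro continuous_intros c1 c2)
    then show ?thesis
    proof (rule continuous_on_cong[THEN iffD1, OF refl, rotated])
      fix a assume a: "a \<in> J"
      show "integral {-1..0} (alphaF FL FR a g k) + integral {0..1} (alphaF FL FR a g k) = integral {-1..1} (alphaF FL FR a g k)"
        by (rule Henstock_Kurzweil_Integration.integral_combine) (use Ifacts[OF g a] in auto)
    qed
  qed
  define co where "co k a = MF FL FR a $ 4 $ 1 * (MF FL FR a $ 3 $ k / MF FL FR a $ 3 $ 1) - MF FL FR a $ 4 $ k" for k a
  have co_cont: "continuous_on J (co k)" for k
    unfolding co_def by (intro continuous_intros continuous_on_component MFcont) (use M31 in auto)
  have co_bnd: "\<exists>B. \<forall>a\<in>J. \<bar>co k a\<bar> \<le> B" for k
  proof -
    have "bounded (co k ` J)" by (intro compact_imp_bounded compact_continuous_image co_cont assms(2))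
    then show ?thesis unfolding bounded_iff by auto
  qed
  obtain B3 B4 where B3: "\<And>a. a \<in> J \<Longrightarrow> \<bar>co 3 a\<bar> \<le> B3" and B4: "\<And>a. a \<in> J \<Longrightarrow> \<bar>co 4 a\<bar> \<le> B4"
    using co_bnd[of 3] co_bnd[of 4] by blast
  define Bc where "Bc = max (max B3 B4) 0"
  have Bc: "Bc \<ge> 0" "\<And>a. a \<in> J \<Longrightarrow> \<bar>co 3 a\<bar> \<le> Bc" "\<And>a. a \<in> J \<Longrightarrow> \<bar>co 4 a\<bar> \<le> Bc"
    unfolding Bc_def using B3 B4 by (auto simp: le_max_iff_disj)
  have psi_eq: "psiF FL FR a g = co 3 a * integral {-1..1} (alphaF FL FR a g 3) + co 4 a * integral {-1..1} (alphaF FL FR a g 4)" for a g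
    unfolding psiF_def co_def by simp
  have part1: "\<forall>g a k. inY g \<longrightarrow> a \<in> J \<longrightarrow> k \<in> {3, 4} \<longrightarrow> alphaF FL FR a g k integrable_on {-1..1}"
    using Ifacts by blast
  have part2: "\<exists>C>0. \<forall>g a. inY g \<longrightarrow> a \<in> J \<longrightarrow> \<bar>psiF FL FR a g\<bar> \<le> C * Ynorm g"
  proof (intro exI[of _ "8 * Bc * Cb + 1"] conjI allI impI)
    have "0 \<le> 8 * Bc * Cb" using Bc(1) Cb0 by simp
    then show "0 < 8 * Bc * Cb + 1" by linarith
    fix g a assume g: "inY g" and a: "a \<in> J"
    have Y0: "0 \<le> Ynorm g" by (rule Y_facts(2)[OF g])
    let ?I3 = "integral {-1..1} (alphaF FL FR a g 3)" and ?I4 = "integral {-1..1} (alphaF FL FR a g 4)"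
    have i3: "\<bar>?I3\<bar> \<le> 4 * Cb * Ynorm g" and i4: "\<bar>?I4\<bar> \<le> 4 * Cb * Ynorm g" using Ifacts[OF g a] by auto
    have "\<bar>psiF FL FR a g\<bar> \<le> \<bar>co 3 a\<bar> * \<bar>?I3\<bar> + \<bar>co 4 a\<bar> * \<bar>?I4\<bar>"
      unfolding psi_eq abs_mult[symmetric] by (rule abs_triangle_ineq)
    also have "\<dots> \<le> Bc * (4 * Cb * Ynorm g) + Bc * (4 * Cb * Ynorm g)"
      by (intro add_mono mult_mono Bc(2,3)[OF a] i3 i4) (use Bc(1) in auto)
    also have "\<dots> = (8 * Bc * Cb) * Ynorm g" by simp
    also have "\<dots> \<le> (8 * Bc * Cb + 1) * Ynorm g" using Y0 by (simp add: distrib_right)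
    finally show "\<bar>psiF FL FR a g\<bar> \<le> (8 * Bc * Cb + 1) * Ynorm g" .
  qed
  have part3: "\<forall>g. inY g \<longrightarrow> continuous_on J (\<lambda>a. psiF FL FR a g)"
  proof (intro allI impI)
    fix g assume g: "inY g"
    show "continuous_on J (\<lambda>a. psiF FL FR a g)"
      unfolding psi_eq by (intro continuous_intros co_cont Icont[OF g])
  qed
  show ?thesis using part1 part2 part3 by blast
qed

end
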